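(* Let $I\subset S$ be a proper graded ideal and let $f\in S$ be a homogeneous element with $f\notin I$. Then $\mathrm{v}(I)\le\mathrm{v}(I:f)+\deg(f)$.
   Context: $S=K[x_1,\dots,x_n]$ is a standard graded polynomial ring over a field $K$, $S_d$ its degree-$d$ component. For a proper graded ideal $J\subset S$, $\mathrm{v}(J)=\min\{d:\exists f\in S_d\text{ with }(J:f)\in\operatorname{Ass}(J)\}$. *)

theory Defs
  imports "HOL-Library.Poly_Mapping"
begin

text \<open>The polynomial ring S = K[x_v | v in 'v] over a field K, with a finite type
 'v (n = CARD('v)).\<close>

type_synonym ('v, 'k) mpoly = "('v \<Rightarrow>\<^sub>0 nat) \<Rightarrow>\<^sub>0 'k"

definition mdeg :: "('v \<Rightarrow>\<^sub>0 nat) \<Rightarrow> nat" where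
  "mdeg m = (\<Sum>i\<in>Poly_Mapping.keys m. Poly_Mapping.lookup m i)"

definition homog_comp_set :: "nat \<Rightarrow> ('v, 'k::zero) mpoly set" where
  "homog_comp_set d = {p. \<forall>m\<in>Poly_Mapping.keys p. mdeg m = d}"

definition hcomp :: "nat \<Rightarrow> ('v, 'k::zero) mpoly \<Rightarrow> ('v, 'k) mpoly" where
  "hcomp d p = Abs_poly_mapping (\<lambda>m. if mdeg m = d then Poly_Mapping.lookup p m else 0)"

definition is_ideal :: "'a::comm_ring_1 set \<Rightarrow> bool" where
  "is_ideal I \<longleftrightarrow> 0 \<in> I \<and> (\<forall>a\<in>I. \<forall>b\<in>I. a + b \<in> I) \<and> (\<forall>a\<in>I. \<forall>r. r * a \<in> I)"

definition is_prime_ideal :: "'a::comm_ring_1 set \<Rightarrow> bool" where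
  "is_prime_ideal P \<longleftrightarrow> is_ideal P \<and> P \<noteq> UNIV \<and> (\<forall>a b. a * b \<in> P \<longrightarrow> a \<in> P \<or> b \<in> P)"

definition graded_ideal :: "('v, 'k::comm_ring_1) mpoly set \<Rightarrow> bool" where
  "graded_ideal I \<longleftrightarrow> is_ideal I \<and> (\<forall>p\<in>I. \<forall>d. hcomp d p \<in> I)"

definition colon :: "'a::comm_ring_1 set \<Rightarrow> 'a \<Rightarrow> 'a set" where
  "colon J f = {g. g * f \<in> J}"

definition Ass :: "'a::comm_ring_1 set \<Rightarrow> 'a set set" where
  "Ass J = {P. is_prime_ideal P \<and> (\<exists>g. P = colon J g)}"

definition v_number :: "('v, 'k::comm_ring_1) mpoly set \<Rightarrow> nat" where
  "v_number J = (LEAST d. \<exists>f\<in>homog_comp_set d. colon J f \<in> Ass J)"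

end

theory Submission
  imports Complex_Main Defs "HOL-Library.FuncSet"
begin


lemma mdeg_sum: "finite S \<Longrightarrow> Poly_Mapping.keys m \<subseteq> S \<Longrightarrow> mdeg m = (\<Sum>i\<in>S. Poly_Mapping.lookup m i)"
  unfolding mdeg_def
  by (rule sum.mono_neutral_left) (auto simp: in_keys_iff)

lemma mdeg_add: "mdeg (a + b) = mdeg a + mdeg b"
proof -
  let ?S = "Poly_Mapping.keys a \<union> Poly_Mapping.keys b"
  have f: "finite ?S" by simp
  have "mdeg (a+b) = (\<Sum>i\<in>?S. Poly_Mapping.lookup (a+b) i)"
    by (rule mdeg_sum[OF f]) (meson keys_add)
  also have "\<dots> = (\<Sum>i\<in>?S. Poly_Mapping.lookup a i) + (\<Sum>i\<in>?S. Poly_Mapping.lookup b i)"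
    by (simp add: lookup_add sum.distrib)
  also have "\<dots> = mdeg a + mdeg b"
    by (simp add: mdeg_sum[OF f])
  finally show ?thesis .
qed



definition vh :: "'v::finite \<Rightarrow> nat" where "vh = (SOME h. inj h)"

lemma inj_vh: "inj (vh :: 'v::finite \<Rightarrow> nat)"
proof -
  obtain f :: "'v \<Rightarrow> nat" and n where "inj_on f UNIV"
    using finite_imp_inj_to_nat_seg[OF finite_UNIV] by blast
  then have "\<exists>h::'v\<Rightarrow>nat. inj h" by blast
  then show ?thesis unfolding vh_def by (rule someI_ex)
qed

definition keyf :: "('v::finite \<Rightarrow>\<^sub>0 nat) \<Rightarrow> nat \<Rightarrow> nat" where
  "keyf m i = (if i = 0 then mdeg m else if \<exists>v::'v. i = Suc (vh v) then Poly_Mapping.lookup m (THE v. i = Suc (vh v)) else 0)"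

definition key :: "('v::finite \<Rightarrow>\<^sub>0 nat) \<Rightarrow> (nat \<Rightarrow>\<^sub>0 nat)" where
  "key m = Abs_poly_mapping (keyf m)"

lemma keyf_fin: fixes m :: "'v::finite \<Rightarrow>\<^sub>0 nat" shows "finite {i. keyf m i \<noteq> 0}"
proof -
  have "{i. keyf m i \<noteq> 0} \<subseteq> insert 0 (Suc ` range (vh :: 'v \<Rightarrow> nat))"
  proof
    fix i assume "i \<in> {i. keyf m i \<noteq> 0}"
    then have "i = 0 \<or> (\<exists>v::'v. i = Suc (vh v))" unfolding keyf_def by (auto split: if_splits)
    then show "i \<in> insert 0 (Suc ` range (vh :: 'v \<Rightarrow> nat))" by blast
  qed
  moreover have "finite (insert 0 (Suc ` range (vh :: 'v \<Rightarrow> nat)))" by simp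
  ultimately show ?thesis by (rule finite_subset)
qed

lemma lookup_key: "Poly_Mapping.lookup (key m) i = keyf m i"
proof -
  have "Poly_Mapping.lookup (Abs_poly_mapping (keyf m)) = keyf m" by (rule lookup_Abs_poly_mapping[OF keyf_fin])
  then show ?thesis unfolding key_def by simp
qed

lemma key0 [simp]: "Poly_Mapping.lookup (key m) 0 = mdeg m"
  by (simp add: lookup_key keyf_def)

lemma keyv [simp]: "Poly_Mapping.lookup (key m) (Suc (vh v)) = Poly_Mapping.lookup m v"
proof -
  have "(THE w. Suc (vh v) = Suc (vh w)) = v"
    using inj_vh by (auto dest: injD)
  then show ?thesis by (auto simp add: lookup_key keyf_def)
qed

lemma key_add: fixes a b :: "'v::finite \<Rightarrow>\<^sub>0 nat" shows "key (a + b) = key a + key b"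
proof (rule poly_mapping_eqI)
  fix i
  show "Poly_Mapping.lookup (key (a + b)) i = Poly_Mapping.lookup (key a + key b) i"
  proof (cases "i = 0")
    case True then show ?thesis by (simp add: lookup_add mdeg_add)
  next
    case False
    show ?thesis
    proof (cases "\<exists>v::'v. i = Suc (vh v)")
      case True
      then obtain v :: 'v where "i = Suc (vh v)" by blast
      then show ?thesis by (simp add: lookup_add)
    next
      case F2: False
      then show ?thesis using False by (simp add: lookup_add lookup_key keyf_def)
    qed
  qed
qed

lemma key_inj: fixes a b :: "'v::finite \<Rightarrow>\<^sub>0 nat" shows "key a = key b \<Longrightarrow> a = b"
proof (rule poly_mapping_eqI)
  fix v :: 'v assume "key a = key b"
  then have "Poly_Mapping.lookup (key a) (Suc (vh v)) = Poly_Mapping.lookup (key b) (Suc (vh v))" by simp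
  then show "Poly_Mapping.lookup a v = Poly_Mapping.lookup b v" by simp
qed

lemma key_less_mdeg: "key a < key b \<Longrightarrow> mdeg a \<le> mdeg b"
proof -
  assume "key a < key b"
  then have "\<exists>k. Poly_Mapping.lookup (key a) k < Poly_Mapping.lookup (key b) k \<and> (\<forall>k'<k. Poly_Mapping.lookup (key a) k' = Poly_Mapping.lookup (key b) k')"
    by (simp add: less_poly_mapping.rep_eq less_fun_def)
  then obtain k where k: "Poly_Mapping.lookup (key a) k < Poly_Mapping.lookup (key b) k"
    "\<And>k'. k' < k \<Longrightarrow> Poly_Mapping.lookup (key a) k' = Poly_Mapping.lookup (key b) k'"
    by blast
  show ?thesis
  proof (cases "k = 0")
    case True then show ?thesis using k(1) by simp
  next
    case False then show ?thesis using k(2)[of 0] by simp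
  qed
qed

definition mrel :: "(('v::finite \<Rightarrow>\<^sub>0 nat) \<times> ('v \<Rightarrow>\<^sub>0 nat)) set" where
  "mrel = {(a, b). key a < key b}"

lemma finite_mdeg_le: "finite {m :: 'v::finite \<Rightarrow>\<^sub>0 nat. mdeg m \<le> D}"
proof -
  have "Poly_Mapping.lookup ` {m :: 'v \<Rightarrow>\<^sub>0 nat. mdeg m \<le> D} \<subseteq> Pi\<^sub>E UNIV (\<lambda>_. {..D})"
  proof
    fix f assume "f \<in> Poly_Mapping.lookup ` {m :: 'v \<Rightarrow>\<^sub>0 nat. mdeg m \<le> D}"
    then obtain m :: "'v \<Rightarrow>\<^sub>0 nat" where m: "f = Poly_Mapping.lookup m" "mdeg m \<le> D" by blast
    have "\<And>v. Poly_Mapping.lookup m v \<le> D"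
    proof -
      fix v
      have "Poly_Mapping.lookup m v \<le> (\<Sum>i\<in>UNIV. Poly_Mapping.lookup m i)"
        by (rule member_le_sum) auto
      also have "\<dots> = mdeg m" by (rule mdeg_sum[symmetric]) auto
      finally show "Poly_Mapping.lookup m v \<le> D" using m(2) by simp
    qed
    then show "f \<in> Pi\<^sub>E UNIV (\<lambda>_. {..D})" using m(1) by (simp add: PiE_UNIV_domain)
  qed
  moreover have "finite (Pi\<^sub>E (UNIV::'v set) (\<lambda>_. {..D}))" by (rule finite_PiE) auto
  ultimately have "finite (Poly_Mapping.lookup ` {m :: 'v \<Rightarrow>\<^sub>0 nat. mdeg m \<le> D})"
    by (rule finite_subset)
  moreover have "inj_on Poly_Mapping.lookup {m :: 'v \<Rightarrow>\<^sub>0 nat. mdeg m \<le> D}"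
    by (rule inj_onI) (rule poly_mapping_eqI, simp)
  ultimately show ?thesis by (simp add: finite_image_iff)
qed

lemma wf_mrel: "wf (mrel :: (('v::finite \<Rightarrow>\<^sub>0 nat) \<times> _) set)"
proof (rule wf_finite_segments)
  show "irrefl (mrel :: (('v::finite \<Rightarrow>\<^sub>0 nat) \<times> _) set)" by (simp add: irrefl_def mrel_def)
  show "trans (mrel :: (('v::finite \<Rightarrow>\<^sub>0 nat) \<times> _) set)" by (auto simp add: trans_def mrel_def)
  fix x :: "'v \<Rightarrow>\<^sub>0 nat"
  have "{y. (y, x) \<in> mrel} \<subseteq> {m. mdeg m \<le> mdeg x}"
    by (auto simp: mrel_def key_less_mdeg)
  then show "finite {y. (y, x) \<in> mrel}" using finite_mdeg_le by (rule finite_subset)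
qed



lemma nondec_subseq:
  fixes g :: "nat \<Rightarrow> nat"
  shows "\<exists>r::nat\<Rightarrow>nat. strict_mono r \<and> (\<forall>m n::nat. m \<le> n \<longrightarrow> g (r m) \<le> g (r n))"
proof -
  obtain f where f: "strict_mono f" "monoseq (\<lambda>n. g (f n))" using seq_monosub by blast
  show ?thesis
  proof (cases "\<forall>m. \<forall>n\<ge>m. g (f m) \<le> g (f n)")
    case True then show ?thesis using f(1) by (intro exI[of _ f]) simp
  next
    case False
    then have dec: "\<forall>m. \<forall>n\<ge>m. g (f n) \<le> g (f m)" using f(2) unfolding monoseq_def by blast
    define v where "v = (LEAST x. \<exists>n. g (f n) = x)"
    have "\<exists>n. g (f n) = v" unfolding v_def by (rule LeastI_ex) blast
    then obtain N where N: "g (f N) = v" by blast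
    have mn: "\<And>n. v \<le> g (f n)" unfolding v_def by (rule Least_le) blast
    define r where "r = (\<lambda>n. f (n + N))"
    have "strict_mono r" unfolding r_def using f(1) by (simp add: strict_mono_def)
    moreover have "\<forall>m n. m \<le> n \<longrightarrow> g (r m) \<le> g (r n)"
    proof (intro allI impI)
      fix m n :: nat assume "m \<le> n"
      have "g (r m) = v" unfolding r_def using dec mn[of "m+N"] N by (metis le_add2 le_antisym)
      moreover have "g (r n) = v" unfolding r_def using dec mn[of "n+N"] N by (metis le_add2 le_antisym)
      ultimately show "g (r m) \<le> g (r n)" by simp
    qed
    ultimately show ?thesis by blast
  qed
qed

lemma dickson_aux:
  fixes s :: "nat \<Rightarrow> ('v \<Rightarrow>\<^sub>0 nat)"
  assumes "finite V"
  shows "\<exists>r::nat\<Rightarrow>nat. strict_mono r \<and> (\<forall>v\<in>V. \<forall>m n::nat. m \<le> n \<longrightarrow> Poly_Mapping.lookup (s (r m)) v \<le> Poly_Mapping.lookup (s (r n)) v)"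
  using assms
proof (induction V rule: finite_induct)
  case empty
  show ?case by (rule exI[of _ "\<lambda>n::nat. n"]) (simp add: strict_mono_def)
next
  case (insert w V)
  then obtain r :: "nat \<Rightarrow> nat" where r: "strict_mono r" "\<forall>v\<in>V. \<forall>m n::nat. m \<le> n \<longrightarrow> Poly_Mapping.lookup (s (r m)) v \<le> Poly_Mapping.lookup (s (r n)) v"
    by blast
  obtain r' :: "nat \<Rightarrow> nat" where r': "strict_mono r'" "\<forall>m n::nat. m \<le> n \<longrightarrow> Poly_Mapping.lookup (s (r (r' m))) w \<le> Poly_Mapping.lookup (s (r (r' n))) w"
    using nondec_subseq[of "\<lambda>n. Poly_Mapping.lookup (s (r n)) w"] by auto
  have "strict_mono (r \<circ> r')" using r(1) r'(1) by (simp add: strict_mono_def)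
  moreover have "\<forall>v\<in>insert w V. \<forall>m n. m \<le> n \<longrightarrow> Poly_Mapping.lookup (s ((r \<circ> r') m)) v \<le> Poly_Mapping.lookup (s ((r \<circ> r') n)) v"
  proof (intro ballI allI impI)
    fix v m n assume v: "v \<in> insert w V" and mn: "(m::nat) \<le> n"
    show "Poly_Mapping.lookup (s ((r \<circ> r') m)) v \<le> Poly_Mapping.lookup (s ((r \<circ> r') n)) v"
    proof (cases "v = w")
      case True then show ?thesis using r'(2) mn by simp
    next
      case False
      then have "v \<in> V" using v by simp
      moreover have "r' m \<le> r' n" using r'(1) mn by (simp add: strict_mono_less_eq)
      ultimately show ?thesis using r(2) by simp
    qed
  qed
  ultimately show ?case by blast
qed

lemma dickson:
  fixes s :: "nat \<Rightarrow> ('v::finite \<Rightarrow>\<^sub>0 nat)"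
  shows "\<exists>i j. i < j \<and> (\<forall>v. Poly_Mapping.lookup (s i) v \<le> Poly_Mapping.lookup (s j) v)"
proof -
  obtain r :: "nat \<Rightarrow> nat" where r: "strict_mono r" "\<forall>v\<in>UNIV. \<forall>m n. m \<le> n \<longrightarrow> Poly_Mapping.lookup (s (r m)) v \<le> Poly_Mapping.lookup (s (r n)) v"
    using dickson_aux[of "UNIV :: 'v set" s] by auto
  have "r 0 < r 1" using r(1) by (simp add: strict_mono_def)
  moreover have "\<forall>v. Poly_Mapping.lookup (s (r 0)) v \<le> Poly_Mapping.lookup (s (r 1)) v" using r(2) by simp
  ultimately show ?thesis by blast
qed

lemma lookup_minus_nat: "Poly_Mapping.lookup (a - b) v = Poly_Mapping.lookup a v - (Poly_Mapping.lookup b v :: nat)"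
  by transfer simp

lemma dickson':
  fixes s :: "nat \<Rightarrow> ('v::finite \<Rightarrow>\<^sub>0 nat)"
  shows "\<exists>i j t. i < j \<and> s j = t + s i"
proof -
  obtain i j where ij: "i < j" "\<forall>v. Poly_Mapping.lookup (s i) v \<le> Poly_Mapping.lookup (s j) v"
    using dickson by blast
  have "s j = (s j - s i) + s i"
    by (rule poly_mapping_eqI) (simp add: lookup_add lookup_minus_nat ij(2))
  then show ?thesis using ij(1) by blast
qed



definition LM :: "('v::finite, 'k::zero) mpoly \<Rightarrow> ('v \<Rightarrow>\<^sub>0 nat)" where
  "LM p = (SOME m. m \<in> Poly_Mapping.keys p \<and> (\<forall>m'\<in>Poly_Mapping.keys p. key m' \<le> key m))"

lemma LM:
  fixes p :: "('v::finite, 'k::zero) mpoly"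
  assumes "p \<noteq> 0"
  shows "LM p \<in> Poly_Mapping.keys p" "\<And>m'. m' \<in> Poly_Mapping.keys p \<Longrightarrow> key m' \<le> key (LM p)"
proof -
  have ne: "key ` Poly_Mapping.keys p \<noteq> {}" using assms by simp
  have fin: "finite (key ` Poly_Mapping.keys p)" by simp
  have "Max (key ` Poly_Mapping.keys p) \<in> key ` Poly_Mapping.keys p" using Max_in[OF fin ne] .
  then obtain m where m: "m \<in> Poly_Mapping.keys p" "key m = Max (key ` Poly_Mapping.keys p)" by auto
  have "\<forall>m'\<in>Poly_Mapping.keys p. key m' \<le> key m" using m(2) fin by simp
  then have "\<exists>m. m \<in> Poly_Mapping.keys p \<and> (\<forall>m'\<in>Poly_Mapping.keys p. key m' \<le> key m)" using m(1) by blast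
  then have "LM p \<in> Poly_Mapping.keys p \<and> (\<forall>m'\<in>Poly_Mapping.keys p. key m' \<le> key (LM p))"
    unfolding LM_def by (rule someI_ex)
  then show "LM p \<in> Poly_Mapping.keys p" "\<And>m'. m' \<in> Poly_Mapping.keys p \<Longrightarrow> key m' \<le> key (LM p)" by auto
qed

lemma lookup_single_mult:
  fixes p :: "('a::cancel_comm_monoid_add, 'k::comm_semiring_1) poly_mapping"
  shows "Poly_Mapping.lookup (Poly_Mapping.single t c * p) (t + m) = c * Poly_Mapping.lookup p m"
proof -
  have "Poly_Mapping.lookup (Poly_Mapping.single t c * p) (t + m)
     = (\<Sum>l. (c when t = l) * (\<Sum>q. Poly_Mapping.lookup p q when t + m = l + q))"
    by (simp add: lookup_mult lookup_single)
  also have "\<dots> = (\<Sum>l. (c * (\<Sum>q. Poly_Mapping.lookup p q when t + m = l + q)) when t = l)"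
    by (simp add: when_mult)
  also have "\<dots> = c * (\<Sum>q. Poly_Mapping.lookup p q when t + m = t + q)"
    by simp
  also have "(\<Sum>q. Poly_Mapping.lookup p q when t + m = t + q) = (\<Sum>q. Poly_Mapping.lookup p q when m = q)"
    by simp
  also have "\<dots> = Poly_Mapping.lookup p m" by simp
  finally show ?thesis .
qed

lemma keys_single_mult:
  fixes p :: "('a::cancel_comm_monoid_add, 'k::comm_semiring_1) poly_mapping"
  shows "x \<in> Poly_Mapping.keys (Poly_Mapping.single t c * p) \<Longrightarrow> \<exists>b\<in>Poly_Mapping.keys p. x = t + b"
  using keys_mult[of "Poly_Mapping.single t c" p] by (auto split: if_splits)

lemma ideal_sub: "is_ideal I \<Longrightarrow> a \<in> I \<Longrightarrow> b \<in> I \<Longrightarrow> a - b \<in> I"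
  unfolding is_ideal_def by (metis diff_conv_add_uminus mult_minus1)

lemma ideal_add: "is_ideal I \<Longrightarrow> a \<in> I \<Longrightarrow> b \<in> I \<Longrightarrow> a + b \<in> I"
  unfolding is_ideal_def by blast

lemma ideal_mult: "is_ideal I \<Longrightarrow> a \<in> I \<Longrightarrow> r * a \<in> I"
  unfolding is_ideal_def by blast

lemma ideal_zero: "is_ideal I \<Longrightarrow> 0 \<in> I"
  unfolding is_ideal_def by blast

lemma no_strict_chain:
  fixes C :: "nat \<Rightarrow> ('v::finite, 'k::field) mpoly set"
  assumes id: "\<And>i. is_ideal (C i)" and ch: "\<And>i. C i \<subset> C (Suc i)"
  shows False
proof -
  define D where "D k = C (Suc k) - C k" for k
  have "\<forall>k. \<exists>p. p \<in> D k \<and> (\<forall>q\<in>D k. \<not> key (LM q) < key (LM p))"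
  proof
    fix k
    obtain x where x: "x \<in> D k" using ch[of k] unfolding D_def by blast
    obtain z where z: "z \<in> LM ` D k" "\<And>y. (y, z) \<in> mrel \<Longrightarrow> y \<notin> LM ` D k"
      using wfE_min[OF wf_mrel, of "LM x" "LM ` D k"] x by blast
    then obtain p where p: "p \<in> D k" "z = LM p" by blast
    have "\<forall>q\<in>D k. \<not> key (LM q) < key (LM p)"
      using z(2) p(2) unfolding mrel_def by blast
    then show "\<exists>p. p \<in> D k \<and> (\<forall>q\<in>D k. \<not> key (LM q) < key (LM p))" using p(1) by blast
  qed
  then obtain p where p: "\<And>k. p k \<in> D k" "\<And>k q. q \<in> D k \<Longrightarrow> \<not> key (LM q) < key (LM (p k))"
    by metis
  have nz: "p k \<noteq> 0" for k using p(1)[of k] ideal_zero[OF id[of k]] unfolding D_def by auto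
  obtain i j t where ij: "i < j" "LM (p j) = t + LM (p i)"
    using dickson'[of "\<lambda>k. LM (p k)"] by blast
  have mono: "C a \<subseteq> C b" if "a \<le> b" for a b
    using lift_Suc_mono_le[of C, OF _ that] ch by blast
  define c where "c = Poly_Mapping.lookup (p j) (LM (p j)) / Poly_Mapping.lookup (p i) (LM (p i))"
  define q where "q = p j - Poly_Mapping.single t c * p i"
  have pi_in: "p i \<in> C j" using p(1)[of i] mono[of "Suc i" j] ij(1) unfolding D_def by auto
  have pj: "p j \<in> C (Suc j)" "p j \<notin> C j" using p(1)[of j] unfolding D_def by auto
  have "p i \<in> C (Suc j)" using pi_in mono[of j "Suc j"] by auto
  then have "Poly_Mapping.single t c * p i \<in> C (Suc j)" by (rule ideal_mult[OF id])
  then have "q \<in> C (Suc j)"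
    unfolding q_def by (rule ideal_sub[OF id pj(1)])
  moreover have "q \<notin> C j"
  proof
    assume "q \<in> C j"
    moreover have "Poly_Mapping.single t c * p i \<in> C j" using pi_in by (rule ideal_mult[OF id])
    ultimately have "q + Poly_Mapping.single t c * p i \<in> C j"
      by (rule ideal_add[OF id])
    then show False using pj(2) unfolding q_def by simp
  qed
  ultimately have qD: "q \<in> D j" unfolding D_def by blast
  then have qnz: "q \<noteq> 0" using ideal_zero[OF id[of j]] unfolding D_def by auto
  have lci: "Poly_Mapping.lookup (p i) (LM (p i)) \<noteq> 0" using LM(1)[OF nz[of i]] by (simp add: in_keys_iff)
  have bound: "key m < key (LM (p j))" if m: "m \<in> Poly_Mapping.keys q" for m
  proof -
    have le: "key m \<le> key (LM (p j))"
    proof -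
      have "Poly_Mapping.lookup q m \<noteq> 0" using m by (simp add: in_keys_iff)
      then have "m \<in> Poly_Mapping.keys (p j) \<or> m \<in> Poly_Mapping.keys (Poly_Mapping.single t c * p i)"
        unfolding q_def by (auto simp: in_keys_iff lookup_minus)
      then show ?thesis
      proof
        assume "m \<in> Poly_Mapping.keys (p j)" then show ?thesis using LM(2)[OF nz[of j]] by blast
      next
        assume "m \<in> Poly_Mapping.keys (Poly_Mapping.single t c * p i)"
        then obtain b where b: "b \<in> Poly_Mapping.keys (p i)" "m = t + b" using keys_single_mult by blast
        have "key b \<le> key (LM (p i))" using LM(2)[OF nz[of i] b(1)] .
        then have "key t + key b \<le> key t + key (LM (p i))" by (rule add_left_mono)
        then show ?thesis using b(2) ij(2) by (simp add: key_add)
      qed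
    qed
    have "Poly_Mapping.lookup q (LM (p j)) = 0"
      unfolding q_def using lci by (simp add: lookup_minus ij(2) lookup_single_mult c_def)
    then have "m \<noteq> LM (p j)" using m by (auto simp: in_keys_iff)
    then have "key m \<noteq> key (LM (p j))" using key_inj by blast
    then show ?thesis using le by simp
  qed
  have "key (LM q) < key (LM (p j))" using bound[OF LM(1)[OF qnz]] .
  then show False using p(2)[OF qD] by blast
qed



type_synonym ('v, 'k) pm = "('v \<Rightarrow>\<^sub>0 nat) \<Rightarrow>\<^sub>0 'k"

lemma lookup_hcomp: "Poly_Mapping.lookup (hcomp d p) m = (if mdeg m = d then Poly_Mapping.lookup p m else 0)"
proof -
  have "finite {m. (if mdeg m = d then Poly_Mapping.lookup p m else 0) \<noteq> 0}"
    by (rule finite_subset[of _ "Poly_Mapping.keys p"]) (auto simp: in_keys_iff)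
  then show ?thesis unfolding hcomp_def by simp
qed

lemma hcomp_add: "hcomp d (a + b) = hcomp d a + (hcomp d b :: ('v,'k::comm_ring_1) mpoly)"
  by (rule poly_mapping_eqI) (simp add: lookup_hcomp lookup_add)

lemma hcomp_sum: "hcomp d (sum f A) = (\<Sum>x\<in>A. hcomp d (f x) :: ('v,'k::comm_ring_1) mpoly)"
  by (rule poly_mapping_eqI) (simp add: lookup_hcomp lookup_sum)

lemma hcomp_in: "hcomp d p \<in> homog_comp_set d"
  unfolding homog_comp_set_def by (auto simp: in_keys_iff lookup_hcomp split: if_splits)

lemma hcomp_homog_same: "x \<in> homog_comp_set D \<Longrightarrow> hcomp D x = x"
  unfolding homog_comp_set_def
  by (intro poly_mapping_eqI) (auto simp: lookup_hcomp in_keys_iff)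

lemma hcomp_homog_other: "x \<in> homog_comp_set D \<Longrightarrow> D' \<noteq> D \<Longrightarrow> hcomp D' x = 0"
  unfolding homog_comp_set_def
  by (intro poly_mapping_eqI) (auto simp: lookup_hcomp in_keys_iff)

lemma hcomp_homog: "x \<in> homog_comp_set D \<Longrightarrow> hcomp D' x = (if D' = D then x else 0)"
  using hcomp_homog_same hcomp_homog_other by auto

lemma homog_mult:
  fixes a b :: "('v, 'k::comm_ring_1) mpoly"
  assumes "a \<in> homog_comp_set i" "b \<in> homog_comp_set j"
  shows "a * b \<in> homog_comp_set (i + j)"
proof -
  have "mdeg m = i + j" if "m \<in> Poly_Mapping.keys (a * b)" for m
  proof -
  from that obtain x y where "x \<in> Poly_Mapping.keys a" "y \<in> Poly_Mapping.keys b" "m = x + y"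
    using keys_mult[of a b] by blast
  then show "mdeg m = i + j" using assms unfolding homog_comp_set_def by (simp add: mdeg_add)
  qed
  then show ?thesis unfolding homog_comp_set_def by blast
qed

lemma one_homog: "(1 :: ('v, 'k::comm_ring_1) mpoly) \<in> homog_comp_set 0"
  unfolding homog_comp_set_def by (simp add: mdeg_def)

definition degs :: "('v, 'k::zero) mpoly \<Rightarrow> nat set" where
  "degs p = mdeg ` Poly_Mapping.keys p"

lemma finite_degs [simp]: "finite (degs p)" unfolding degs_def by simp

lemma hcomp_not_deg: "d \<notin> degs p \<Longrightarrow> hcomp d p = 0"
  unfolding degs_def by (intro poly_mapping_eqI) (auto simp: lookup_hcomp in_keys_iff)

lemma decomp: "p = (\<Sum>d\<in>degs p. hcomp d (p :: ('v,'k::comm_ring_1) mpoly))"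
proof (rule poly_mapping_eqI)
  fix m
  have "Poly_Mapping.lookup (\<Sum>d\<in>degs p. hcomp d p) m = (\<Sum>d\<in>degs p. if mdeg m = d then Poly_Mapping.lookup p m else 0)"
    by (simp add: lookup_sum lookup_hcomp)
  also have "\<dots> = (if mdeg m \<in> degs p then Poly_Mapping.lookup p m else 0)"
    by (simp add: sum.delta)
  also have "\<dots> = Poly_Mapping.lookup p m"
    unfolding degs_def by (auto simp: in_keys_iff)
  finally show "Poly_Mapping.lookup p m = Poly_Mapping.lookup (\<Sum>d\<in>degs p. hcomp d p) m" by simp
qed

lemma hcomp_sum_homog:
  assumes "\<And>x. x \<in> A \<Longrightarrow> f x \<in> homog_comp_set (dg x)"
  shows "hcomp D (sum f A) = (\<Sum>x\<in>A. if dg x = D then f x else (0 :: ('v,'k::comm_ring_1) mpoly))"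
  unfolding hcomp_sum by (rule sum.cong[OF refl]) (simp add: hcomp_homog[OF assms])

lemma hcomp_mult_homog:
  fixes p g :: "('v, 'k::comm_ring_1) mpoly"
  assumes g: "g \<in> homog_comp_set e"
  shows "hcomp (d + e) (p * g) = hcomp d p * g"
proof -
  have "p * g = (\<Sum>i\<in>degs p. hcomp i p * g)"
    by (subst decomp[of p]) (simp add: sum_distrib_right)
  then have "hcomp (d + e) (p * g) = (\<Sum>i\<in>degs p. if i + e = d + e then hcomp i p * g else 0)"
    using hcomp_sum_homog[of "degs p" "\<lambda>i. hcomp i p * g" "\<lambda>i. i + e" "d + e"] homog_mult[OF hcomp_in g]
    by simp
  also have "\<dots> = (\<Sum>i\<in>degs p. if d = i then hcomp i p * g else 0)"
    by (intro sum.cong) auto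
  also have "\<dots> = (if d \<in> degs p then hcomp d p * g else 0)"
    by (simp add: sum.delta)
  also have "\<dots> = hcomp d p * g" using hcomp_not_deg[of d p] by auto
  finally show ?thesis .
qed



lemma degs_ne: "p \<noteq> 0 \<Longrightarrow> degs p \<noteq> {}"
  unfolding degs_def by simp

lemma hcomp_top:
  fixes a b :: "('v, 'k::comm_ring_1) mpoly"
  assumes "a \<noteq> 0" "b \<noteq> 0"
  shows "hcomp (Max (degs a) + Max (degs b)) (a * b) = hcomp (Max (degs a)) a * hcomp (Max (degs b)) b"
proof -
  define ta where "ta = Max (degs a)"
  define tb where "tb = Max (degs b)"
  have ta: "ta \<in> degs a" unfolding ta_def using degs_ne[OF assms(1)] by simp
  have tb: "tb \<in> degs b" unfolding tb_def using degs_ne[OF assms(2)] by simp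
  have "a * b = (\<Sum>i\<in>degs a. hcomp i a) * (\<Sum>j\<in>degs b. hcomp j b)"
    using decomp[of a] decomp[of b] by simp
  also have "\<dots> = (\<Sum>i\<in>degs a. \<Sum>j\<in>degs b. hcomp i a * hcomp j b)"
    by (rule sum_product)
  also have "\<dots> = (\<Sum>z\<in>degs a \<times> degs b. hcomp (fst z) a * hcomp (snd z) b)"
    by (simp add: sum.cartesian_product split_def)
  finally have ab: "a * b = (\<Sum>z\<in>degs a \<times> degs b. hcomp (fst z) a * hcomp (snd z) b)" .
  have "hcomp (ta + tb) (a * b) = (\<Sum>z\<in>degs a \<times> degs b. if fst z + snd z = ta + tb then hcomp (fst z) a * hcomp (snd z) b else 0)"
    unfolding ab by (rule hcomp_sum_homog) (rule homog_mult[OF hcomp_in hcomp_in])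
  also have "\<dots> = (\<Sum>z\<in>degs a \<times> degs b. if (ta, tb) = z then hcomp (fst z) a * hcomp (snd z) b else 0)"
  proof (rule sum.cong[OF refl])
    fix z assume z: "z \<in> degs a \<times> degs b"
    have "fst z \<le> ta" unfolding ta_def using z by (intro Max_ge) auto
    moreover have "snd z \<le> tb" unfolding tb_def using z by (intro Max_ge) auto
    ultimately have "fst z + snd z = ta + tb \<longleftrightarrow> (ta, tb) = z" by (cases z) auto
    then show "(if fst z + snd z = ta + tb then hcomp (fst z) a * hcomp (snd z) b else 0) =
          (if (ta, tb) = z then hcomp (fst z) a * hcomp (snd z) b else 0)" by simp
  qed
  also have "\<dots> = hcomp ta a * hcomp tb b"
    using ta tb by (simp add: sum.delta)
  finally show ?thesis unfolding ta_def tb_def .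
qed

lemma keys_minus_hcomp:
  fixes a :: "('v, 'k::comm_ring_1) mpoly"
  shows "Poly_Mapping.keys (a - hcomp d a) = {m \<in> Poly_Mapping.keys a. mdeg m \<noteq> d}"
  by (auto simp: in_keys_iff lookup_minus lookup_hcomp split: if_splits)

lemma card_minus_top:
  fixes a :: "('v, 'k::comm_ring_1) mpoly"
  assumes "a \<noteq> 0"
  shows "card (Poly_Mapping.keys (a - hcomp (Max (degs a)) a)) < card (Poly_Mapping.keys a)"
proof -
  have "Max (degs a) \<in> degs a" using degs_ne[OF assms] by simp
  then obtain m where m: "m \<in> Poly_Mapping.keys a" "mdeg m = Max (degs a)" unfolding degs_def by auto
  have "Poly_Mapping.keys (a - hcomp (Max (degs a)) a) \<subset> Poly_Mapping.keys a"
    using m unfolding keys_minus_hcomp by blast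
  then show ?thesis by (rule psubset_card_mono[rotated]) simp
qed

lemma prime_of_graded:
  fixes Q :: "('v, 'k::comm_ring_1) mpoly set"
  assumes id: "is_ideal Q" and ne: "Q \<noteq> UNIV" and gr: "\<And>p d. p \<in> Q \<Longrightarrow> hcomp d p \<in> Q"
    and hp: "\<And>x y i j. x \<in> homog_comp_set i \<Longrightarrow> y \<in> homog_comp_set j \<Longrightarrow> x * y \<in> Q \<Longrightarrow> x \<in> Q \<or> y \<in> Q"
  shows "is_prime_ideal Q"
proof -
  have main: "\<forall>a b. card (Poly_Mapping.keys a) + card (Poly_Mapping.keys b) = n \<longrightarrow> a * b \<in> Q \<longrightarrow> a \<notin> Q \<longrightarrow> b \<notin> Q \<longrightarrow> False" for n
  proof (induction n rule: less_induct)
    case (less n)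
    show ?case
    proof (intro allI impI)
      fix a b :: "('v, 'k) mpoly"
      assume n: "card (Poly_Mapping.keys a) + card (Poly_Mapping.keys b) = n" and ab: "a * b \<in> Q"
        and a: "a \<notin> Q" and b: "b \<notin> Q"
      have a0: "a \<noteq> 0" using a ideal_zero[OF id] by auto
      have b0: "b \<noteq> 0" using b ideal_zero[OF id] by auto
      define A where "A = hcomp (Max (degs a)) a"
      define B where "B = hcomp (Max (degs b)) b"
      show False
      proof (cases "A \<in> Q")
        case True
        have "a - A \<notin> Q"
        proof
          assume "a - A \<in> Q"
          then have "(a - A) + A \<in> Q" using True by (rule ideal_add[OF id])
          then show False using a by simp
        qed
        moreover have "(a - A) * b \<in> Q"
        proof -
          have "A * b \<in> Q" using ideal_mult[OF id True, of b] by (simp add: mult.commute)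
          then have "a * b - A * b \<in> Q" using ab by (intro ideal_sub[OF id])
          then show ?thesis by (simp add: algebra_simps)
        qed
        moreover have "card (Poly_Mapping.keys (a - A)) + card (Poly_Mapping.keys b) < n"
          using card_minus_top[OF a0] n unfolding A_def by simp
        ultimately show False using less.IH b by blast
      next
        case FA: False
        show False
        proof (cases "B \<in> Q")
          case True
          have "b - B \<notin> Q"
          proof
            assume "b - B \<in> Q"
            then have "(b - B) + B \<in> Q" using True by (rule ideal_add[OF id])
            then show False using b by simp
          qed
          moreover have "a * (b - B) \<in> Q"
          proof -
            have "a * B \<in> Q" using ideal_mult[OF id True, of a] .
            then have "a * b - a * B \<in> Q" using ab by (intro ideal_sub[OF id])
            then show ?thesis by (simp add: algebra_simps)
          qed
          moreover have "card (Poly_Mapping.keys a) + card (Poly_Mapping.keys (b - B)) < n"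
            using card_minus_top[OF b0] n unfolding B_def by simp
          ultimately show False using less.IH a by blast
        next
          case False
          have "A * B \<in> Q" using gr[OF ab] hcomp_top[OF a0 b0] unfolding A_def B_def by metis
          then show False using hp[OF hcomp_in hcomp_in] FA False unfolding A_def B_def by blast
        qed
      qed
    qed
  qed
  show ?thesis unfolding is_prime_ideal_def using id ne main by blast
qed



lemma colon_ideal: "is_ideal J \<Longrightarrow> is_ideal (colon J g)"
  unfolding is_ideal_def colon_def by (auto simp: algebra_simps)

lemma colon_graded:
  fixes J :: "('v, 'k::comm_ring_1) mpoly set"
  assumes "graded_ideal J" "g \<in> homog_comp_set e"
  shows "graded_ideal (colon J g)"
proof -
  have id: "is_ideal J" using assms(1) unfolding graded_ideal_def by blast
  have "hcomp d p \<in> colon J g" if "p \<in> colon J g" for p d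
  proof -
    have "hcomp (d + e) (p * g) \<in> J" using that assms(1) unfolding colon_def graded_ideal_def by blast
    then show ?thesis using hcomp_mult_homog[OF assms(2)] unfolding colon_def by simp
  qed
  then show ?thesis unfolding graded_ideal_def using colon_ideal[OF id] by blast
qed

lemma colon_colon: "colon (colon I f) g = colon I (g * f)"
  unfolding colon_def by (simp add: mult.assoc)

lemma exists_ass:
  fixes J :: "('v::finite, 'k::field) mpoly set"
  assumes gr: "graded_ideal J" and one: "1 \<notin> J"
  shows "\<exists>e g. g \<in> homog_comp_set e \<and> colon J g \<in> Ass J"
proof -
  have id: "is_ideal J" using gr unfolding graded_ideal_def by blast
  define F where "F = {colon J g | g. (\<exists>e. g \<in> homog_comp_set e) \<and> g \<notin> J}"
  define R where "R = {(A, B). B \<subset> A \<and> is_ideal A \<and> is_ideal (B :: ('v, 'k) mpoly set)}"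
  have wfR: "wf R"
  proof (rule ccontr)
    assume "\<not> wf R"
    then obtain f where f: "\<And>i. (f (Suc i), f i) \<in> R" unfolding wf_iff_no_infinite_down_chain by blast
    show False
      by (rule no_strict_chain[of f]) (use f in \<open>auto simp: R_def\<close>)
  qed
  have "colon J 1 \<in> F" unfolding F_def using one one_homog by blast
  then obtain Q where Q: "Q \<in> F" "\<And>A. (A, Q) \<in> R \<Longrightarrow> A \<notin> F"
    using wfE_min[OF wfR] by metis
  then obtain g e where g: "Q = colon J g" "g \<in> homog_comp_set e" "g \<notin> J" unfolding F_def by blast
  have Qid: "is_ideal Q" using g(1) colon_ideal[OF id] by simp
  have maxi: "A = Q" if "A \<in> F" "Q \<subseteq> A" for A
  proof (rule ccontr)
    assume "A \<noteq> Q"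
    moreover have "is_ideal A" using that(1) colon_ideal[OF id] unfolding F_def by blast
    ultimately have "(A, Q) \<in> R" unfolding R_def using that(2) Qid by blast
    then show False using Q(2) that(1) by blast
  qed
  have "is_prime_ideal Q"
  proof (rule prime_of_graded[OF Qid])
    have "1 \<notin> Q" using g unfolding colon_def by simp
    then show "Q \<noteq> UNIV" by blast
    show "hcomp d p \<in> Q" if "p \<in> Q" for p d
      using colon_graded[OF gr g(2)] that g(1) unfolding graded_ideal_def by blast
    show "x \<in> Q \<or> y \<in> Q" if xy: "x \<in> homog_comp_set i" "y \<in> homog_comp_set j" "x * y \<in> Q" for x y i j
    proof (cases "x \<in> Q")
      case True then show ?thesis by blast
    next
      case False
      then have xg: "x * g \<notin> J" using g(1) unfolding colon_def by simp
      have inF: "colon J (x * g) \<in> F" unfolding F_def using xg homog_mult[OF xy(1) g(2)] by blast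
      have "Q \<subseteq> colon J (x * g)"
      proof
        fix h assume "h \<in> Q"
        then have "h * g \<in> J" using g(1) unfolding colon_def by simp
        then have "x * (h * g) \<in> J" by (rule ideal_mult[OF id])
        then show "h \<in> colon J (x * g)" unfolding colon_def by (simp add: algebra_simps)
      qed
      then have eq: "colon J (x * g) = Q" using maxi inF by blast
      have "(x * y) * g \<in> J" using xy(3) g(1) unfolding colon_def by simp
      then have "y \<in> colon J (x * g)" unfolding colon_def by (simp add: algebra_simps)
      then show ?thesis using eq by simp
    qed
  qed
  then have "colon J g \<in> Ass J" unfolding Ass_def using g(1) by blast
  then show ?thesis using g(2) by blast
qed

theorem proposition4p3:
  fixes I :: "('v::finite, 'k::field) mpoly set"
    and f :: "('v, 'k) mpoly" and d :: nat
  assumes "graded_ideal I" and "I \<noteq> UNIV"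
    and "f \<in> homog_comp_set d" and "f \<notin> I"
  shows "v_number I \<le> v_number (colon I f) + d"
proof -
  define J where "J = colon I f"
  have grJ: "graded_ideal J" unfolding J_def by (rule colon_graded[OF assms(1) assms(3)])
  have "1 \<notin> J" unfolding J_def colon_def using assms(4) by simp
  then obtain e g where "g \<in> homog_comp_set e" "colon J g \<in> Ass J" using exists_ass[OF grJ] by blast
  then have ex: "\<exists>h\<in>homog_comp_set e. colon J h \<in> Ass J" by blast
  have "\<exists>h\<in>homog_comp_set (v_number J). colon J h \<in> Ass J"
    unfolding v_number_def by (rule LeastI[of _ e]) (rule ex)
  then obtain h where h: "h \<in> homog_comp_set (v_number J)" "colon J h \<in> Ass J" by blast
  have eq: "colon I (h * f) = colon J h" unfolding J_def by (simp add: colon_colon)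
  have "colon I (h * f) \<in> Ass I"
    using h(2) unfolding eq unfolding Ass_def by (auto simp: eq[symmetric])
  moreover have "h * f \<in> homog_comp_set (v_number J + d)" by (rule homog_mult[OF h(1) assms(3)])
  ultimately have "\<exists>k\<in>homog_comp_set (v_number J + d). colon I k \<in> Ass I" by blast
  then have "v_number I \<le> v_number J + d" unfolding v_number_def by (rule Least_le)
  then show ?thesis unfolding J_def .
qed

end
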